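(* Let $F$ be a continuous function defined on a rectangle $R=[a,b]\times[c,d]$ ($a<b$, $c<d$) with values in $\mathbb{R}^m$, and let $\mathcal{C}(F_{|\partial R})$ be the Coons patch interpolating $F$ on $\partial R$, namely $$\mathcal{C}(F_{|\partial R})(s,t)=\tfrac{b-s}{b-a}F(a,t)+\tfrac{s-a}{b-a}F(b,t)+\tfrac{d-t}{d-c}F(s,c)+\tfrac{t-c}{d-c}F(s,d)-B(s,t),$$ where $B(s,t)=\tfrac{b-s}{b-a}\big(\tfrac{d-t}{d-c}F(a,c)+\tfrac{t-c}{d-c}F(a,d)\big)+\tfrac{s-a}{b-a}\big(\tfrac{d-t}{d-c}F(b,c)+\tfrac{t-c}{d-c}F(b,d)\big)$. Then for all $(s,t)\in(a,b)\times(c,d)$, $$F(s,t)-\mathcal{C}(F_{|\partial R})(s,t)=\frac{(s-a)(s-b)(t-c)(t-d)}{(b-a)(d-c)}\Big([b,s;d,t]F-[s,a;d,t]F+[s,a;t,c]F-[b,s;t,c]F\Big).$$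
   Context: For a bivariate function $F$ and reals $\sigma_1\ne\sigma_2$, $\tau_1\ne\tau_2$, the mixed second divided difference is $[\sigma_1,\sigma_2;\tau_1,\tau_2]F=\frac{F(\sigma_1,\tau_1)+F(\sigma_2,\tau_2)-F(\sigma_2,\tau_1)-F(\sigma_1,\tau_2)}{(\sigma_1-\sigma_2)(\tau_1-\tau_2)}$. *)

theory Defs
  imports "HOL-Analysis.Analysis"
begin

definition mixed_dd :: "(real \<times> real \<Rightarrow> 'v::real_vector) \<Rightarrow> real \<Rightarrow> real \<Rightarrow> real \<Rightarrow> real \<Rightarrow> 'v" where
  "mixed_dd F s1 s2 t1 t2 =
     (F (s1, t1) + F (s2, t2) - F (s2, t1) - F (s1, t2)) /\<^sub>R ((s1 - s2) * (t1 - t2))"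

definition coons_bilinear :: "real \<Rightarrow> real \<Rightarrow> real \<Rightarrow> real \<Rightarrow> (real \<times> real \<Rightarrow> 'v::real_vector) \<Rightarrow> real \<times> real \<Rightarrow> 'v" where
  "coons_bilinear a b c d F = (\<lambda>(s, t).
     ((b - s) / (b - a)) *\<^sub>R (((d - t) / (d - c)) *\<^sub>R F (a, c) + ((t - c) / (d - c)) *\<^sub>R F (a, d))
   + ((s - a) / (b - a)) *\<^sub>R (((d - t) / (d - c)) *\<^sub>R F (b, c) + ((t - c) / (d - c)) *\<^sub>R F (b, d)))"

definition coons_patch :: "real \<Rightarrow> real \<Rightarrow> real \<Rightarrow> real \<Rightarrow> (real \<times> real \<Rightarrow> 'v::real_vector) \<Rightarrow> real \<times> real \<Rightarrow> 'v" where
  "coons_patch a b c d F = (\<lambda>(s, t).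
     ((b - s) / (b - a)) *\<^sub>R F (a, t) + ((s - a) / (b - a)) *\<^sub>R F (b, t)
   + ((d - t) / (d - c)) *\<^sub>R F (s, c) + ((t - c) / (d - c)) *\<^sub>R F (s, d)
   - coons_bilinear a b c d F (s, t))"

end

theory Submission
  imports Defs
begin

lemma key:
  fixes a b c d s t ac ad bc bd xat bt sc sd st :: real
  assumes "a < s" "s < b" "c < t" "t < d"
  shows "st - (((b - s) / (b - a)) * xat + ((s - a) / (b - a)) * bt
   + ((d - t) / (d - c)) * sc + ((t - c) / (d - c)) * sd
   - (((b - s) / (b - a)) * (((d - t) / (d - c)) * ac + ((t - c) / (d - c)) * ad)
   + ((s - a) / (b - a)) * (((d - t) / (d - c)) * bc + ((t - c) / (d - c)) * bd)))
  = ((s - a) * (s - b) * (t - c) * (t - d) / ((b - a) * (d - c))) *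
     ((bd + st - sd - bt) / ((b - s) * (d - t))
    - (sd + xat - ad - st) / ((s - a) * (d - t))
    + (st + ac - xat - sc) / ((s - a) * (t - c))
    - (bt + sc - st - bc) / ((b - s) * (t - c)))"
proof -
  have h: "b - a \<noteq> 0" "d - c \<noteq> 0" "b - s \<noteq> 0" "s - a \<noteq> 0" "d - t \<noteq> 0" "t - c \<noteq> 0"
    using assms by auto
  show ?thesis using h
    by (simp add: divide_simps) (simp add: algebra_simps)
qed

theorem proposition1:
  fixes F :: "real \<times> real \<Rightarrow> real ^ 'm" and a b c d s t :: real
  assumes "a < b" and "c < d"
    and "continuous_on ({a..b} \<times> {c..d}) F"
    and "s \<in> {a<..<b}" and "t \<in> {c<..<d}"
  shows "F (s, t) - coons_patch a b c d F (s, t) =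
    ((s - a) * (s - b) * (t - c) * (t - d) / ((b - a) * (d - c))) *\<^sub>R
      (mixed_dd F b s d t - mixed_dd F s a d t + mixed_dd F s a t c - mixed_dd F b s t c)"
  unfolding vec_eq_iff
proof
  fix i
  have o: "a < s" "s < b" "c < t" "t < d" using assms by auto
  show "(F (s, t) - coons_patch a b c d F (s, t)) $ i =
      (((s - a) * (s - b) * (t - c) * (t - d) / ((b - a) * (d - c))) *\<^sub>R
      (mixed_dd F b s d t - mixed_dd F s a d t + mixed_dd F s a t c - mixed_dd F b s t c)) $ i"
    using key[OF o, of "F (s,t) $ i" "F (a,t) $ i" "F (b,t) $ i" "F (s,c) $ i" "F (s,d) $ i"
        "F (a,c) $ i" "F (a,d) $ i" "F (b,c) $ i" "F (b,d) $ i"]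
    by (simp add: coons_patch_def coons_bilinear_def mixed_dd_def divide_inverse)
qed

end
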